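(* Let $n\ge2$ and $j\in[n]$. For every integer $m\ge2$, $r(m,n)\le r(m+1,n)$ and $R_j(m,n)\subseteq R_j(m+1,n)$.
   Context: General product of dimension-$n$ tensors: for $\mathbb{A}$ of order $m\ge2$ and $\mathbb{B}$ of order $k\ge1$, $(\mathbb{A}\mathbb{B})_{i\alpha_1\ldots\alpha_{m-1}}=\sum_{i_2,\ldots,i_m=1}^n a_{ii_2\ldots i_m}b_{i_2\alpha_1}\cdots b_{i_m\alpha_{m-1}}$ ($\alpha_l\in[n]^{k-1}$); it is associative and $\mathbb{A}^k$ denotes the $k$-fold power. The majorization matrix is $(M(\mathbb{C}))_{ij}=c_{ij\ldots j}$. A nonnegative tensor $\mathbb{A}$ is primitive if $M(\mathbb{A}^r)>0$ entrywise for some $r\ge1$. For $j\in[n]$, $\mathbb{A}$ is $j$-primitive if there is $k\ge1$ with $(M(\mathbb{A}^k))_{uj}>0$ for all $u\in[n]$; the least such $k$ is $\gamma_j(\mathbb{A})$. $r(m,n)$ is the maximum of $\gamma_j(\mathbb{A})$ over all nonnegative, non-primitive tensors $\mathbb{A}$ of order $m$ and dimension $n$ and all $j\in[n]$ such that $\mathbb{A}$ is $j$-primitive. $R_j(m,n)$ is the set of integers $k$ such that there exists a nonnegative, non-primitive tensor $\mathbb{A}$ of order $m$ and dimension $n$ that is $j$-primitive with $\gamma_j(\mathbb{A})=k$. *)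

theory Defs
  imports Main "HOL-Library.Extended_Nat"
begin

text \<open>A tensor of order m and dimension n is represented as a function
  on index lists; only index lists of length m with entries in
  {0..<n} (i.e. [n] shifted to 0-based) are meaningful.\<close>

type_synonym tensor = "nat list \<Rightarrow> real"

definition idx_lists :: "nat \<Rightarrow> nat \<Rightarrow> nat list set" where
  "idx_lists n l = {xs. length xs = l \<and> set xs \<subseteq> {..<n}}"

text \<open>General product of A (order m) and B (order k), dimension n.
  The result has order (m-1)(k-1)+1; the index is i followed by
  the blocks alpha_1 ... alpha_(m-1), each of length k-1.\<close>

definition tensor_prod :: "nat \<Rightarrow> nat \<Rightarrow> nat \<Rightarrow> tensor \<Rightarrow> tensor \<Rightarrow> tensor" where
  "tensor_prod n m k A B = (\<lambda>idx.
     \<Sum>is\<in>idx_lists n (m - 1).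
       A (hd idx # is) *
       (\<Prod>l<m - 1. B ((is ! l) # take (k - 1) (drop (l * (k - 1)) (tl idx)))))"

text \<open>tensor_pow n m A r is the r-fold power A^r (r \<ge> 1) of the order m
  tensor A; it has order (m-1)^r + 1.  The value for r = 0 is a dummy.\<close>

fun tensor_pow :: "nat \<Rightarrow> nat \<Rightarrow> tensor \<Rightarrow> nat \<Rightarrow> tensor" where
  "tensor_pow n m A 0 = A"
| "tensor_pow n m A (Suc 0) = A"
| "tensor_pow n m A (Suc (Suc r)) =
     tensor_prod n ((m - 1) ^ Suc r + 1) m (tensor_pow n m A (Suc r)) A"

definition maj_mat :: "nat \<Rightarrow> tensor \<Rightarrow> nat \<Rightarrow> nat \<Rightarrow> real" where
  "maj_mat ord C i j = C (i # replicate (ord - 1) j)"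

definition nonneg_tensor :: "nat \<Rightarrow> nat \<Rightarrow> tensor \<Rightarrow> bool" where
  "nonneg_tensor m n A \<longleftrightarrow> (\<forall>idx\<in>idx_lists n m. 0 \<le> A idx)"

definition primitive_tensor :: "nat \<Rightarrow> nat \<Rightarrow> tensor \<Rightarrow> bool" where
  "primitive_tensor m n A \<longleftrightarrow>
     (\<exists>r\<ge>1. \<forall>i<n. \<forall>j<n. maj_mat ((m - 1) ^ r + 1) (tensor_pow n m A r) i j > 0)"

definition j_primitive_at :: "nat \<Rightarrow> nat \<Rightarrow> tensor \<Rightarrow> nat \<Rightarrow> nat \<Rightarrow> bool" where
  "j_primitive_at m n A j k \<longleftrightarrow>
     k \<ge> 1 \<and> (\<forall>u<n. maj_mat ((m - 1) ^ k + 1) (tensor_pow n m A k) u j > 0)"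

definition j_primitive :: "nat \<Rightarrow> nat \<Rightarrow> tensor \<Rightarrow> nat \<Rightarrow> bool" where
  "j_primitive m n A j \<longleftrightarrow> (\<exists>k. j_primitive_at m n A j k)"

definition gamma_j :: "nat \<Rightarrow> nat \<Rightarrow> tensor \<Rightarrow> nat \<Rightarrow> nat" where
  "gamma_j m n A j = (LEAST k. j_primitive_at m n A j k)"

definition R_set :: "nat \<Rightarrow> nat \<Rightarrow> nat \<Rightarrow> nat set" where
  "R_set j m n = {k. \<exists>A. nonneg_tensor m n A \<and> \<not> primitive_tensor m n A \<and>
                        j_primitive m n A j \<and> gamma_j m n A j = k}"

text \<open>r(m,n): the maximum of gamma_j over all admissible A and j, taken as
  a supremum in enat (equals the maximum whenever that exists).\<close>

definition r_max :: "nat \<Rightarrow> nat \<Rightarrow> enat" where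
  "r_max m n = Sup (enat ` (\<Union>j\<in>{..<n}. R_set j m n))"

end

theory Submission
  imports Defs
begin

definition Tset :: "nat \<Rightarrow> nat \<Rightarrow> tensor \<Rightarrow> nat set \<Rightarrow> nat set" where
  "Tset n m A S = {i. i < n \<and> (\<exists>c\<in>idx_lists n (m-1). A (i#c) > 0 \<and> set c \<subseteq> S)}"

definition Sj :: "nat \<Rightarrow> nat \<Rightarrow> tensor \<Rightarrow> nat \<Rightarrow> nat set" where
  "Sj n m A j = {u. u < n \<and> A (u # replicate (m-1) j) > 0}"

lemma finite_idx: "finite (idx_lists n l)"
  unfolding idx_lists_def using finite_lists_length_eq[of "{..<n}" l] by (simp add: conj_commute)

lemma pow_SS: "tensor_pow n m A (Suc (Suc r)) (i # xs) =
  (\<Sum>is\<in>idx_lists n ((m-1)^Suc r). tensor_pow n m A (Suc r) (i#is) *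
     (\<Prod>l<(m-1)^Suc r. A ((is!l) # take (m-1) (drop (l*(m-1)) xs))))"
  by (simp add: tensor_prod_def)

lemma idx_nth:
  assumes "xs \<in> idx_lists n L" "l < L"
  shows "xs ! l < n"
proof -
  have "length xs = L" "set xs \<subseteq> {..<n}" using assms(1) unfolding idx_lists_def by auto
  then have "xs ! l \<in> set xs" using assms(2) by (metis nth_mem)
  then show ?thesis using \<open>set xs \<subseteq> {..<n}\<close> by auto
qed

lemma block_idx:
  assumes "xs \<in> idx_lists n (K*N)" "l < K"
  shows "take N (drop (l*N) xs) \<in> idx_lists n N"
proof -
  have "Suc l * N \<le> K * N" using assms by (intro mult_le_mono1) simp
  moreover have "set (take N (drop (l*N) xs)) \<subseteq> set xs"
    by (meson order_trans set_drop_subset set_take_subset)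
  ultimately show ?thesis using assms unfolding idx_lists_def by auto
qed

lemma pow_nonneg:
  assumes "nonneg_tensor m n A" "m \<ge> 2"
  shows "\<forall>i<n. \<forall>xs\<in>idx_lists n ((m-1)^Suc r). 0 \<le> tensor_pow n m A (Suc r) (i#xs)"
proof (induction r)
  case 0
  show ?case
  proof (intro allI impI ballI)
    fix i xs assume i: "i < n" and xs: "xs \<in> idx_lists n ((m-1)^Suc 0)"
    have "length (i#xs) = m" using xs assms(2) unfolding idx_lists_def by simp
    moreover have "set (i#xs) \<subseteq> {..<n}" using xs i unfolding idx_lists_def by simp
    ultimately have "i#xs \<in> idx_lists n m" unfolding idx_lists_def by blast
    then show "0 \<le> tensor_pow n m A (Suc 0) (i#xs)"
      using assms(1) unfolding nonneg_tensor_def by simp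
  qed
next
  case (Suc r)
  show ?case
  proof (intro allI impI ballI)
    fix i xs assume i: "i < n" and xs: "xs \<in> idx_lists n ((m-1)^Suc (Suc r))"
    have xs': "xs \<in> idx_lists n ((m-1)^Suc r * (m-1))" using xs power_Suc2[of "m-1" "Suc r"] by metis
    show "0 \<le> tensor_pow n m A (Suc (Suc r)) (i#xs)"
      unfolding pow_SS
    proof (intro sum_nonneg mult_nonneg_nonneg prod_nonneg)
      fix zs assume "zs \<in> idx_lists n ((m-1)^Suc r)"
      then show "0 \<le> tensor_pow n m A (Suc r) (i # zs)" using Suc i by blast
    next
      fix zs l assume zs: "zs \<in> idx_lists n ((m-1)^Suc r)" and l: "l \<in> {..<(m-1)^Suc r}"
      have b: "take (m-1) (drop (l*(m-1)) xs) \<in> idx_lists n (m-1)"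
        using block_idx[OF xs'] l by simp
      have "zs ! l < n" using idx_nth[OF zs] l by simp
      then have "(zs!l) # take (m-1) (drop (l*(m-1)) xs) \<in> idx_lists n m"
        using b assms(2) unfolding idx_lists_def by auto
      then show "0 \<le> A ((zs!l) # take (m-1) (drop (l*(m-1)) xs))"
        using assms(1) unfolding nonneg_tensor_def by blast
    qed
  qed
qed

lemma concat_block:
  "\<forall>c\<in>set L. length c = N \<Longrightarrow> l < length L \<Longrightarrow> take N (drop (l*N) (concat L)) = L!l"
proof (induction L arbitrary: l)
  case Nil then show ?case by simp
next
  case (Cons c L)
  show ?case
  proof (cases l)
    case 0 then show ?thesis using Cons by simp
  next
    case (Suc l')
    then show ?thesis using Cons by simp
  qed
qed


lemma pos_step:
  assumes nn: "nonneg_tensor m n A" and m: "m \<ge> 2" and i: "i < n"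
    and xs: "xs \<in> idx_lists n ((m-1)^Suc r * (m-1))"
  shows "tensor_pow n m A (Suc (Suc r)) (i#xs) > 0 \<longleftrightarrow>
    (\<exists>ys\<in>idx_lists n ((m-1)^Suc r). tensor_pow n m A (Suc r) (i#ys) > 0 \<and>
       (\<forall>l<(m-1)^Suc r. A ((ys!l) # take (m-1) (drop (l*(m-1)) xs)) > 0))"
proof -
  define I where "I = idx_lists n ((m-1)^Suc r)"
  define F where "F ys l = A ((ys!l) # take (m-1) (drop (l*(m-1)) xs))" for ys l
  define f where "f ys = tensor_pow n m A (Suc r) (i#ys) * (\<Prod>l<(m-1)^Suc r. F ys l)" for ys
  have Fnn: "0 \<le> F ys l" if "ys \<in> I" "l < (m-1)^Suc r" for ys l
  proof -
    have b: "take (m-1) (drop (l*(m-1)) xs) \<in> idx_lists n (m-1)"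
      using block_idx[OF xs] that by simp
    have "ys ! l < n" using idx_nth[of ys n "(m-1)^Suc r" l] that unfolding I_def by blast
    then have "(ys!l) # take (m-1) (drop (l*(m-1)) xs) \<in> idx_lists n m"
      using b m unfolding idx_lists_def by auto
    then show ?thesis using nn unfolding nonneg_tensor_def F_def by blast
  qed
  have Pnn: "0 \<le> tensor_pow n m A (Suc r) (i#ys)" if "ys \<in> I" for ys
    using pow_nonneg[OF nn m] i that unfolding I_def by blast
  have fnn: "0 \<le> f ys" if "ys \<in> I" for ys
    unfolding f_def using Pnn[OF that] Fnn[OF that] by (intro mult_nonneg_nonneg prod_nonneg) auto
  have fpos: "0 < f ys \<longleftrightarrow> 0 < tensor_pow n m A (Suc r) (i#ys) \<and> (\<forall>l<(m-1)^Suc r. 0 < F ys l)"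
    if "ys \<in> I" for ys
  proof -
    have pp: "0 < (\<Prod>l<(m-1)^Suc r. F ys l) \<longleftrightarrow> (\<forall>l<(m-1)^Suc r. 0 < F ys l)"
    proof
      assume "\<forall>l<(m-1)^Suc r. 0 < F ys l" then show "0 < (\<Prod>l<(m-1)^Suc r. F ys l)"
        by (intro prod_pos) auto
    next
      assume a: "0 < (\<Prod>l<(m-1)^Suc r. F ys l)"
      show "\<forall>l<(m-1)^Suc r. 0 < F ys l"
      proof (intro allI impI)
        fix l assume l: "l < (m-1)^Suc r"
        have "F ys l \<noteq> 0"
        proof
          assume "F ys l = 0"
          then have "(\<Prod>l<(m-1)^Suc r. F ys l) = 0" using l by (intro prod_zero) auto
          then show False using a by linarith
        qed
        then show "0 < F ys l" using Fnn[OF that l] by simp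
      qed
    qed
    have "0 \<le> (\<Prod>l<(m-1)^Suc r. F ys l)" using Fnn[OF that] by (intro prod_nonneg) auto
    then show ?thesis unfolding f_def pp[symmetric] using Pnn[OF that]
      by (simp add: zero_less_mult_iff)
  qed
  have "tensor_pow n m A (Suc (Suc r)) (i#xs) = sum f I"
    unfolding pow_SS f_def F_def I_def ..
  moreover have "0 < sum f I \<longleftrightarrow> (\<exists>ys\<in>I. 0 < f ys)"
  proof
    assume "0 < sum f I"
    then have "sum f I \<noteq> 0" by simp
    then have "\<not> (\<forall>ys\<in>I. f ys = 0)" using sum_nonneg_eq_0_iff[of I f] finite_idx fnn
      unfolding I_def by blast
    then show "\<exists>ys\<in>I. 0 < f ys" using fnn by (metis less_eq_real_def)
  next
    assume "\<exists>ys\<in>I. 0 < f ys"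
    then obtain y where "y \<in> I" "0 < f y" by blast
    then show "0 < sum f I" using fnn finite_idx[of n] unfolding I_def
      by (metis sum_pos2)
  qed
  ultimately show ?thesis using fpos unfolding I_def F_def by auto
qed


lemma length_concat_const: "\<forall>c\<in>set L. length c = N \<Longrightarrow> length (concat L) = length L * N"
  by (induction L) auto

lemma G_lemma:
  assumes nn: "nonneg_tensor m n A" and m: "m \<ge> 2" and i: "i < n"
  shows "(\<exists>xs\<in>idx_lists n ((m-1)^Suc r). tensor_pow n m A (Suc r) (i#xs) > 0 \<and> set xs \<subseteq> S)
         \<longleftrightarrow> i \<in> (Tset n m A ^^ Suc r) S"
proof (induction r arbitrary: S)
  case 0
  show ?case using i by (simp add: Tset_def)
next
  case (Suc r)
  define N where "N = m - 1"
  define K where "K = N^Suc r"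
  have eq: "(\<exists>xs\<in>idx_lists n (K*N). tensor_pow n m A (Suc (Suc r)) (i#xs) > 0 \<and> set xs \<subseteq> S)
     \<longleftrightarrow> (\<exists>ys\<in>idx_lists n K. tensor_pow n m A (Suc r) (i#ys) > 0 \<and> set ys \<subseteq> Tset n m A S)"
  proof
    assume "\<exists>xs\<in>idx_lists n (K*N). tensor_pow n m A (Suc (Suc r)) (i#xs) > 0 \<and> set xs \<subseteq> S"
    then obtain xs where xs: "xs \<in> idx_lists n (K*N)" and p: "tensor_pow n m A (Suc (Suc r)) (i#xs) > 0"
      and sx: "set xs \<subseteq> S" by blast
    from pos_step[OF nn m i, of xs r] xs p obtain ys where ys: "ys \<in> idx_lists n K"
      and py: "tensor_pow n m A (Suc r) (i#ys) > 0"
      and bl: "\<forall>l<K. A ((ys!l) # take N (drop (l*N) xs)) > 0"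
      unfolding K_def N_def by blast
    have "set ys \<subseteq> Tset n m A S"
    proof
      fix y assume "y \<in> set ys"
      then obtain l where l: "l < length ys" "y = ys ! l" by (metis in_set_conv_nth)
      have lK: "l < K" using l ys unfolding idx_lists_def by simp
      have c: "take N (drop (l*N) xs) \<in> idx_lists n N" using block_idx[OF xs lK] .
      have "set (take N (drop (l*N) xs)) \<subseteq> set xs"
        by (meson order_trans set_drop_subset set_take_subset)
      then have "set (take N (drop (l*N) xs)) \<subseteq> S" using sx by blast
      moreover have "y < n" using idx_nth[OF ys lK] l by simp
      ultimately show "y \<in> Tset n m A S" unfolding Tset_def N_def using c bl lK l N_def by auto
    qed
    then show "\<exists>ys\<in>idx_lists n K. tensor_pow n m A (Suc r) (i#ys) > 0 \<and> set ys \<subseteq> Tset n m A S"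
      using ys py by blast
  next
    assume "\<exists>ys\<in>idx_lists n K. tensor_pow n m A (Suc r) (i#ys) > 0 \<and> set ys \<subseteq> Tset n m A S"
    then obtain ys where ys: "ys \<in> idx_lists n K" and py: "tensor_pow n m A (Suc r) (i#ys) > 0"
      and st: "set ys \<subseteq> Tset n m A S" by blast
    define ch where "ch y = (SOME c. c \<in> idx_lists n N \<and> A (y#c) > 0 \<and> set c \<subseteq> S)" for y
    have ch: "ch y \<in> idx_lists n N \<and> A (y # ch y) > 0 \<and> set (ch y) \<subseteq> S" if "y \<in> set ys" for y
    proof -
      have "\<exists>c. c \<in> idx_lists n N \<and> A (y#c) > 0 \<and> set c \<subseteq> S"
        using st that unfolding Tset_def N_def by blast
      then show ?thesis unfolding ch_def by (rule someI_ex)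
    qed
    define xs where "xs = concat (map ch ys)"
    have lenys: "length ys = K" using ys unfolding idx_lists_def by simp
    have lens: "\<forall>c\<in>set (map ch ys). length c = N" using ch unfolding idx_lists_def by auto
    have "length xs = K * N" unfolding xs_def using length_concat_const[OF lens] lenys by simp
    moreover have "set xs \<subseteq> S" unfolding xs_def using ch by auto
    moreover have "set xs \<subseteq> {..<n}" unfolding xs_def using ch unfolding idx_lists_def by auto
    ultimately have xs: "xs \<in> idx_lists n (K*N)" and sx: "set xs \<subseteq> S"
      unfolding idx_lists_def by auto
    have bl: "\<forall>l<K. A ((ys!l) # take N (drop (l*N) xs)) > 0"
    proof (intro allI impI)
      fix l assume l: "l < K"
      have "take N (drop (l*N) xs) = map ch ys ! l"
        unfolding xs_def using concat_block[OF lens] l lenys by simp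
      then have "take N (drop (l*N) xs) = ch (ys ! l)" using l lenys by simp
      moreover have "ys ! l \<in> set ys" using l lenys by simp
      ultimately show "A ((ys!l) # take N (drop (l*N) xs)) > 0" using ch by simp
    qed
    have "tensor_pow n m A (Suc (Suc r)) (i#xs) > 0"
      using pos_step[OF nn m i, of xs r] xs ys py bl unfolding K_def N_def by blast
    then show "\<exists>xs\<in>idx_lists n (K*N). tensor_pow n m A (Suc (Suc r)) (i#xs) > 0 \<and> set xs \<subseteq> S"
      using xs sx by blast
  qed
  have KN: "(m-1)^Suc (Suc r) = K * N" unfolding K_def N_def by (rule power_Suc2)
  have "(Tset n m A ^^ Suc (Suc r)) S = (Tset n m A ^^ Suc r) (Tset n m A S)"
    by (simp only: funpow_Suc_right o_apply)
  then show ?case unfolding KN eq using Suc[of "Tset n m A S"] unfolding K_def N_def by simp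
qed


lemma maj_char:
  assumes nn: "nonneg_tensor m n A" and m: "m \<ge> 2" and u: "u < n" and j: "j < n" and k: "k \<ge> 1"
  shows "maj_mat ((m-1)^k+1) (tensor_pow n m A k) u j > 0 \<longleftrightarrow>
         u \<in> (Tset n m A ^^ (k-1)) (Sj n m A j)"
proof (cases k)
  case 0 then show ?thesis using k by simp
next
  case (Suc k')
  show ?thesis
  proof (cases k')
    case 0
    then show ?thesis using Suc u by (simp add: maj_mat_def Sj_def)
  next
    case (Suc r)
    define N where "N = m - 1"
    define K where "K = N^Suc r"
    have KN: "(m-1)^k = K * N" unfolding K_def N_def \<open>k = Suc k'\<close> Suc by (rule power_Suc2)
    have xs: "replicate (K*N) j \<in> idx_lists n (K*N)" using j unfolding idx_lists_def by auto
    have blk: "take N (drop (l*N) (replicate (K*N) j)) = replicate N j" if "l < K" for l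
    proof -
      have "Suc l * N \<le> K * N" using that by (intro mult_le_mono1) simp
      then show ?thesis by simp
    qed
    have "maj_mat ((m-1)^k+1) (tensor_pow n m A k) u j =
          tensor_pow n m A (Suc (Suc r)) (u # replicate (K*N) j)"
      unfolding maj_mat_def KN using \<open>k = Suc k'\<close> Suc by simp
    then have "maj_mat ((m-1)^k+1) (tensor_pow n m A k) u j > 0 \<longleftrightarrow>
      (\<exists>ys\<in>idx_lists n K. tensor_pow n m A (Suc r) (u#ys) > 0 \<and>
       (\<forall>l<K. A ((ys!l) # replicate N j) > 0))"
      using pos_step[OF nn m u, of "replicate (K*N) j" r] xs blk unfolding K_def N_def
      by (metis (no_types, lifting))
    also have "\<dots> \<longleftrightarrow> (\<exists>ys\<in>idx_lists n K. tensor_pow n m A (Suc r) (u#ys) > 0 \<and>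
       set ys \<subseteq> Sj n m A j)"
    proof -
      have "(\<forall>l<K. A ((ys!l) # replicate N j) > 0) \<longleftrightarrow> set ys \<subseteq> Sj n m A j"
        if ys: "ys \<in> idx_lists n K" for ys
      proof -
        have len: "length ys = K" using ys unfolding idx_lists_def by simp
        have "set ys \<subseteq> Sj n m A j \<longleftrightarrow> (\<forall>l<K. ys ! l \<in> Sj n m A j)"
          using len by (auto simp: set_conv_nth)
        also have "\<dots> \<longleftrightarrow> (\<forall>l<K. A ((ys!l) # replicate N j) > 0)"
          using idx_nth[OF ys] unfolding Sj_def N_def by auto
        finally show ?thesis by simp
      qed
      then show ?thesis by blast
    qed
    also have "\<dots> \<longleftrightarrow> u \<in> (Tset n m A ^^ Suc r) (Sj n m A j)"
      using G_lemma[OF nn m u, of r "Sj n m A j"] unfolding K_def N_def by simp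
    finally show ?thesis using \<open>k = Suc k'\<close> Suc by simp
  qed
qed

lemma jprim_char:
  assumes nn: "nonneg_tensor m n A" and m: "m \<ge> 2" and j: "j < n"
  shows "j_primitive_at m n A j k \<longleftrightarrow> k \<ge> 1 \<and> (\<forall>u<n. u \<in> (Tset n m A ^^ (k-1)) (Sj n m A j))"
  unfolding j_primitive_at_def using maj_char[OF nn m _ j] by auto

lemma prim_char:
  assumes nn: "nonneg_tensor m n A" and m: "m \<ge> 2"
  shows "primitive_tensor m n A \<longleftrightarrow>
     (\<exists>r\<ge>1. \<forall>i<n. \<forall>j<n. i \<in> (Tset n m A ^^ (r-1)) (Sj n m A j))"
  unfolding primitive_tensor_def using maj_char[OF nn m] by (metis (no_types, lifting))


definition ext_t :: "tensor \<Rightarrow> tensor" where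
  "ext_t A idx = (case idx of i # x # c \<Rightarrow> if c \<noteq> [] \<and> x = hd c then A (i # c) else 0 | _ \<Rightarrow> 0)"

lemma ext_nonneg:
  assumes nn: "nonneg_tensor m n A"
  shows "nonneg_tensor (m+1) n (ext_t A)"
  unfolding nonneg_tensor_def
proof
  fix idx assume idx: "idx \<in> idx_lists n (m+1)"
  show "0 \<le> ext_t A idx"
  proof (cases idx)
    case Nil then show ?thesis by (simp add: ext_t_def)
  next
    case (Cons i rest)
    show ?thesis
    proof (cases rest)
      case Nil then show ?thesis using Cons by (simp add: ext_t_def)
    next
      case (Cons x c)
      have "i # c \<in> idx_lists n m" using idx \<open>idx = i # rest\<close> Cons unfolding idx_lists_def by auto
      then have "0 \<le> A (i # c)" using nn unfolding nonneg_tensor_def by blast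
      then show ?thesis using \<open>idx = i # rest\<close> Cons by (simp add: ext_t_def)
    qed
  qed
qed

lemma ext_Tset:
  assumes m: "m \<ge> 2"
  shows "Tset n (m+1) (ext_t A) S = Tset n m A S"
proof
  show "Tset n (m+1) (ext_t A) S \<subseteq> Tset n m A S"
  proof
    fix i assume "i \<in> Tset n (m+1) (ext_t A) S"
    then obtain c' where i: "i < n" and c': "c' \<in> idx_lists n m" and p: "ext_t A (i#c') > 0"
      and s: "set c' \<subseteq> S" unfolding Tset_def by auto
    obtain x c where cc: "c' = x # c" using c' m unfolding idx_lists_def by (cases c') auto
    have p2: "c \<noteq> [] \<and> x = hd c \<and> A (i#c) > 0" using p unfolding cc ext_t_def
      by (auto split: if_splits)
    have "c \<in> idx_lists n (m-1)" using c' cc unfolding idx_lists_def by auto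
    then show "i \<in> Tset n m A S" unfolding Tset_def using i p2 s cc by auto
  qed
next
  show "Tset n m A S \<subseteq> Tset n (m+1) (ext_t A) S"
  proof
    fix i assume "i \<in> Tset n m A S"
    then obtain c where i: "i < n" and c: "c \<in> idx_lists n (m-1)" and p: "A (i#c) > 0"
      and s: "set c \<subseteq> S" unfolding Tset_def by auto
    have ne: "c \<noteq> []" using c m unfolding idx_lists_def by auto
    then have hd: "hd c \<in> set c" by simp
    have "hd c # c \<in> idx_lists n m" using c m hd unfolding idx_lists_def by auto
    moreover have "ext_t A (i # hd c # c) > 0" using p ne by (simp add: ext_t_def)
    moreover have "set (hd c # c) \<subseteq> S" using s hd by auto
    ultimately have "\<exists>c'\<in>idx_lists n m. ext_t A (i # c') > 0 \<and> set c' \<subseteq> S" by blast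
    then show "i \<in> Tset n (m+1) (ext_t A) S" unfolding Tset_def using i by simp
  qed
qed

lemma ext_Sj:
  assumes m: "m \<ge> 2"
  shows "Sj n (m+1) (ext_t A) j = Sj n m A j"
proof -
  obtain m' where mm: "m = Suc (Suc m')" using m by (metis add_2_eq_Suc le_Suc_ex)
  show ?thesis unfolding Sj_def mm by (simp add: ext_t_def)
qed

lemma R_incl:
  assumes j: "j < n" and m: "m \<ge> 2"
  shows "R_set j m n \<subseteq> R_set j (m + 1) n"
proof
  fix k assume "k \<in> R_set j m n"
  then obtain A where nn: "nonneg_tensor m n A" and np: "\<not> primitive_tensor m n A"
    and jp: "j_primitive m n A j" and g: "gamma_j m n A j = k" unfolding R_set_def by blast
  have m1: "m + 1 \<ge> 2" using m by simp
  have nn': "nonneg_tensor (m+1) n (ext_t A)" using ext_nonneg[OF nn] .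
  have T: "Tset n (m+1) (ext_t A) = Tset n m A" using ext_Tset[OF m] by blast
  have jeq: "j_primitive_at (m+1) n (ext_t A) j = j_primitive_at m n A j"
    using jprim_char[OF nn' m1 j] jprim_char[OF nn m j] T ext_Sj[OF m] by auto
  have peq: "primitive_tensor (m+1) n (ext_t A) = primitive_tensor m n A"
    using prim_char[OF nn' m1] prim_char[OF nn m] T ext_Sj[OF m] by auto
  have "\<not> primitive_tensor (m+1) n (ext_t A)" using np peq by simp
  moreover have "j_primitive (m+1) n (ext_t A) j" using jp jeq unfolding j_primitive_def by simp
  moreover have "gamma_j (m+1) n (ext_t A) j = k" using g jeq unfolding gamma_j_def by simp
  ultimately show "k \<in> R_set j (m + 1) n" unfolding R_set_def using nn' by blast
qed

theorem proposition4p10: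
  fixes n j m :: nat
  assumes "n \<ge> 2" and "j < n" and "m \<ge> 2"
  shows "r_max m n \<le> r_max (m + 1) n \<and> R_set j m n \<subseteq> R_set j (m + 1) n"
proof
  have "(\<Union>j\<in>{..<n}. R_set j m n) \<subseteq> (\<Union>j\<in>{..<n}. R_set j (m+1) n)"
    using R_incl[OF _ assms(3)] by blast
  then show "r_max m n \<le> r_max (m + 1) n" unfolding r_max_def
    by (rule Sup_subset_mono[OF image_mono])
  show "R_set j m n \<subseteq> R_set j (m + 1) n" using R_incl[OF assms(2,3)] .
qed

end
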